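(* Let $\hat V=[n]\cup\{s,t\}$, and let $\hat f$ map an edge-weight vector $w\in\mathbb{R}^{\binom{\hat V}{2}}$ (for which the maximizer is unique) to $$\hat f(w)=\arg\max_{y\in\{-1,1\}^{\hat V},\ y_s=1,\ y_t=-1}\ \sum_{\{i,j\}}w_{\{i,j\}}(1-y_iy_j),$$ the unique maximum $s$-$t$ cut. Let $S=\{\{u,v\}:u\in\{s,t\},v\in[n]\}$. Then $S$ is a dominating set of $\hat f$ with sensitivity $2$: whenever $w'$ differs from $w$ on one pair by at most $1$ in absolute value, there is $a$ supported on $S$ with $\|a\|_1\le2$, depending only on $\hat f(w)$ and $w'-w$, such that $\hat f(w'+a)=\hat f(w)$ (with unique maximizer). *)

theory Defs
  imports Complex_Main
begin

datatype vtx = Src | Snk | V nat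

definition Vhat :: "nat \<Rightarrow> vtx set" where
  "Vhat n = {Src, Snk} \<union> V ` {1..n}"

definition edges :: "nat \<Rightarrow> vtx set set" where
  "edges n = {{u, v} | u v. u \<in> Vhat n \<and> v \<in> Vhat n \<and> u \<noteq> v}"

definition Sdom :: "nat \<Rightarrow> vtx set set" where
  "Sdom n = {{u, V k} | u k. u \<in> {Src, Snk} \<and> k \<in> {1..n}}"

definition cuts :: "nat \<Rightarrow> (vtx \<Rightarrow> real) set" where
  "cuts n = {y. (\<forall>v\<in>Vhat n. y v \<in> {-1, 1}) \<and> (\<forall>v. v \<notin> Vhat n \<longrightarrow> y v = 0)
               \<and> y Src = 1 \<and> y Snk = -1}"

definition cutval :: "nat \<Rightarrow> (vtx set \<Rightarrow> real) \<Rightarrow> (vtx \<Rightarrow> real) \<Rightarrow> real" where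
  "cutval n w y = (\<Sum>e\<in>edges n. w e * (1 - (\<Prod>v\<in>e. y v)))"

definition is_unique_max :: "nat \<Rightarrow> (vtx set \<Rightarrow> real) \<Rightarrow> (vtx \<Rightarrow> real) \<Rightarrow> bool" where
  "is_unique_max n w y \<longleftrightarrow> y \<in> cuts n \<and>
     (\<forall>y'\<in>cuts n. y' \<noteq> y \<longrightarrow> cutval n w y' < cutval n w y)"

definition has_unique_max :: "nat \<Rightarrow> (vtx set \<Rightarrow> real) \<Rightarrow> bool" where
  "has_unique_max n w \<longleftrightarrow> (\<exists>y. is_unique_max n w y)"

text \<open>fhat: the unique maximum s-t cut (meaningful when has_unique_max n w).\<close>
definition fhat :: "nat \<Rightarrow> (vtx set \<Rightarrow> real) \<Rightarrow> (vtx \<Rightarrow> real)" where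
  "fhat n w = (THE y. is_unique_max n w y)"

definition one_pair_change :: "nat \<Rightarrow> (vtx set \<Rightarrow> real) \<Rightarrow> (vtx set \<Rightarrow> real) \<Rightarrow> bool" where
  "one_pair_change n w w' \<longleftrightarrow> (\<exists>e\<in>edges n. (\<forall>e'\<in>edges n. e' \<noteq> e \<longrightarrow> w' e' = w e')
       \<and> \<bar>w' e - w e\<bar> \<le> 1)"

definition wdiff :: "nat \<Rightarrow> (vtx set \<Rightarrow> real) \<Rightarrow> (vtx set \<Rightarrow> real) \<Rightarrow> (vtx set \<Rightarrow> real)" where
  "wdiff n w w' = (\<lambda>e. if e \<in> edges n then w' e - w e else 0)"

end

theory Submission
  imports Defs
begin

lemma fin_V: "finite (Vhat n)" by (simp add: Vhat_def)
lemma fin_E: "finite (edges n)"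
  by (rule finite_subset[of _ "Pow (Vhat n)"]) (auto simp: edges_def fin_V)
lemma fin_S: "finite (Sdom n)"
  by (rule finite_subset[of _ "Pow (Vhat n)"]) (auto simp: Sdom_def Vhat_def)

lemma cut_add: "cutval n (\<lambda>e. f e + g e) y = cutval n f y + cutval n g y"
  unfolding cutval_def by (simp add: distrib_right sum.distrib)

lemma cut_cong: "(\<And>e. e \<in> edges n \<Longrightarrow> f e = g e) \<Longrightarrow> cutval n f y = cutval n g y"
  unfolding cutval_def by (rule sum.cong) auto

lemma cut_delta: "e0 \<in> edges n \<Longrightarrow>
   cutval n (\<lambda>e. if e = e0 then c else 0) y = c * (1 - (\<Prod>v\<in>e0. y v))"
proof -
  assume h: "e0 \<in> edges n"
  have "cutval n (\<lambda>e. if e = e0 then c else 0) y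
     = (\<Sum>e\<in>edges n. if e = e0 then c * (1 - (\<Prod>v\<in>e0. y v)) else 0)"
    unfolding cutval_def by (rule sum.cong) auto
  also have "\<dots> = c * (1 - (\<Prod>v\<in>e0. y v))" using h fin_E by (simp add: sum.delta)
  finally show ?thesis .
qed

lemma uniq_same: "is_unique_max n w y1 \<Longrightarrow> is_unique_max n w y2 \<Longrightarrow> y1 = y2"
  unfolding is_unique_max_def by force

lemma fhat_eq: "is_unique_max n w y \<Longrightarrow> fhat n w = y"
  unfolding fhat_def using uniq_same by blast

lemma transfer_max:
  assumes "is_unique_max n w y"
    and "\<And>y'. y' \<in> cuts n \<Longrightarrow> cutval n w y - cutval n w y' \<le> cutval n w2 y - cutval n w2 y'"
  shows "is_unique_max n w2 y"
  using assms unfolding is_unique_max_def by (metis diff_gt_0_iff_gt order_less_le_trans)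

definition opp :: "(vtx \<Rightarrow> real) \<Rightarrow> nat \<Rightarrow> vtx" where
  "opp y k = (if y (V k) = 1 then Snk else Src)"

definition R :: "nat \<Rightarrow> (vtx set \<Rightarrow> real) \<Rightarrow> nat \<times> nat \<Rightarrow> bool" where
  "R n d p \<longleftrightarrow> fst p \<in> {1..n} \<and> snd p \<in> {1..n} \<and> fst p \<noteq> snd p \<and> d {V (fst p), V (snd p)} \<noteq> 0"

definition AA :: "nat \<Rightarrow> (vtx \<Rightarrow> real) \<Rightarrow> (vtx set \<Rightarrow> real) \<Rightarrow> (vtx set \<Rightarrow> real)" where
  "AA n y d = (if (\<exists>p. R n d p) then
      (let p = (SOME p. R n d p); k = fst p; j = snd p; c = \<bar>d {V k, V j}\<bar> in
        (\<lambda>e. (if e = {opp y k, V k} then c else 0) + (if e = {opp y j, V j} then c else 0)))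
    else (\<lambda>e. if e \<in> Sdom n then - d e else 0))"

theorem lemma5p7:
  fixes n :: nat
  shows "\<exists>A :: (vtx \<Rightarrow> real) \<Rightarrow> (vtx set \<Rightarrow> real) \<Rightarrow> (vtx set \<Rightarrow> real).
           \<forall>w w'. has_unique_max n w \<and> one_pair_change n w w' \<longrightarrow>
             (let a = A (fhat n w) (wdiff n w w') in
                (\<forall>e. e \<notin> Sdom n \<longrightarrow> a e = 0)
              \<and> (\<Sum>e\<in>Sdom n. \<bar>a e\<bar>) \<le> 2
              \<and> has_unique_max n (\<lambda>e. w' e + a e)
              \<and> fhat n (\<lambda>e. w' e + a e) = fhat n w)"
proof (intro exI allI impI)
  fix w w'
  assume H: "has_unique_max n w \<and> one_pair_change n w w'"
  define y where "y = fhat n w"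
  have uy: "is_unique_max n w y"
    using H unfolding has_unique_max_def y_def using fhat_eq by blast
  obtain e0 where e0: "e0 \<in> edges n" and oth: "\<And>e'. e' \<in> edges n \<Longrightarrow> e' \<noteq> e0 \<Longrightarrow> w' e' = w e'"
    and dl: "\<bar>w' e0 - w e0\<bar> \<le> 1"
    using H unfolding one_pair_change_def by blast
  define \<delta> where "\<delta> = w' e0 - w e0"
  define d where "d = wdiff n w w'"
  have dd: "d = (\<lambda>e. if e = e0 then \<delta> else 0)"
    using oth e0 by (auto simp: d_def wdiff_def \<delta>_def)
  define a where "a = AA n y d"
  have w'eq: "\<And>e. e \<in> edges n \<Longrightarrow> w' e = w e + d e"
    using oth by (auto simp: dd \<delta>_def)
  have yc: "y \<in> cuts n" using uy unfolding is_unique_max_def by blast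
  have goal: "(\<forall>e. e \<notin> Sdom n \<longrightarrow> a e = 0) \<and> (\<Sum>e\<in>Sdom n. \<bar>a e\<bar>) \<le> 2
              \<and> is_unique_max n (\<lambda>e. w' e + a e) y"
  proof (cases "\<exists>p. R n d p")
    case True
    define p where "p = (SOME p. R n d p)"
    have Rp: "R n d p" unfolding p_def using True by (rule someI_ex)
    define k where "k = fst p"
    define j where "j = snd p"
    have kj: "k \<in> {1..n}" "j \<in> {1..n}" "k \<noteq> j" and dnz: "d {V k, V j} \<noteq> 0"
      using Rp by (auto simp: R_def k_def j_def)
    have e0kj: "e0 = {V k, V j}" using dnz by (auto simp: dd split: if_splits)
    define c where "c = \<bar>\<delta>\<bar>"
    have dkj: "d {V k, V j} = \<delta>" using e0kj dd by simp
    define E1 where "E1 = {opp y k, V k}"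
    define E2 where "E2 = {opp y j, V j}"
    have aeq: "a = (\<lambda>e. (if e = E1 then c else 0) + (if e = E2 then c else 0))"
      unfolding a_def AA_def using True
      unfolding k_def j_def c_def E1_def E2_def Let_def p_def[symmetric] using dkj[unfolded k_def j_def] by (simp only: if_True)
    have E12: "E1 \<noteq> E2" using kj by (auto simp: E1_def E2_def opp_def doubleton_eq_iff)
    have E1S: "E1 \<in> Sdom n" using kj unfolding E1_def Sdom_def opp_def by auto
    have E2S: "E2 \<in> Sdom n" using kj unfolding E2_def Sdom_def opp_def by auto
    have SE: "Sdom n \<subseteq> edges n"
    proof
      fix e assume "e \<in> Sdom n"
      then obtain u k where "u \<in> {Src, Snk}" "k \<in> {1..n}" "e = {u, V k}" by (auto simp: Sdom_def)
      then show "e \<in> edges n" unfolding edges_def Vhat_def by blast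
    qed
    have c0: "c \<ge> 0" "c \<le> 1" using dl by (auto simp: c_def \<delta>_def)
    have part1: "\<forall>e. e \<notin> Sdom n \<longrightarrow> a e = 0" using E1S E2S aeq by auto
    have "(\<Sum>e\<in>Sdom n. \<bar>a e\<bar>) = (\<Sum>e\<in>Sdom n. (if e = E1 then c else 0) + (if e = E2 then c else 0))"
      using c0 aeq by (intro sum.cong) auto
    also have "\<dots> = 2 * c" using E1S E2S fin_S by (simp add: sum.distrib sum.delta)
    finally have part2: "(\<Sum>e\<in>Sdom n. \<bar>a e\<bar>) \<le> 2" using c0 by simp
    have cv: "cutval n (\<lambda>e. w' e + a e) z = cutval n w z + \<delta> * (1 - (\<Prod>v\<in>e0. z v))
         + c * (1 - (\<Prod>v\<in>E1. z v)) + c * (1 - (\<Prod>v\<in>E2. z v))" for z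
    proof -
      have "cutval n (\<lambda>e. w' e + a e) z = cutval n (\<lambda>e. w e + (if e = e0 then \<delta> else 0)
           + ((if e = E1 then c else 0) + (if e = E2 then c else 0))) z"
        by (rule cut_cong) (simp add: w'eq dd aeq)
      also have "\<dots> = cutval n w z + \<delta> * (1 - (\<Prod>v\<in>e0. z v))
         + c * (1 - (\<Prod>v\<in>E1. z v)) + c * (1 - (\<Prod>v\<in>E2. z v))"
        using e0 E1S E2S SE by (simp add: cut_add cut_delta subset_iff)
      finally show ?thesis .
    qed
    have vals: "\<And>z. z \<in> cuts n \<Longrightarrow> z (V k) \<in> {-1,1} \<and> z (V j) \<in> {-1,1} \<and> z Src = 1 \<and> z Snk = -1"
      using kj by (auto simp: cuts_def Vhat_def)
    have part3: "is_unique_max n (\<lambda>e. w' e + a e) y"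
    proof (rule transfer_max[OF uy])
      fix z assume zc: "z \<in> cuts n"
      have pe0: "(\<Prod>v\<in>e0. q v) = q (V k) * q (V j)" for q :: "vtx \<Rightarrow> real"
        using kj e0kj by simp
      have pE1: "(\<Prod>v\<in>E1. q v) = q (opp y k) * q (V k)" for q :: "vtx \<Rightarrow> real"
        by (simp add: E1_def opp_def)
      have pE2: "(\<Prod>v\<in>E2. q v) = q (opp y j) * q (V j)" for q :: "vtx \<Rightarrow> real"
        by (simp add: E2_def opp_def)
      show "cutval n w y - cutval n w z \<le> cutval n (\<lambda>e. w' e + a e) y - cutval n (\<lambda>e. w' e + a e) z"
        unfolding cv pe0 pE1 pE2 using vals[OF zc] vals[OF yc] c0
        by (auto simp: opp_def c_def abs_if algebra_simps)
    qed
    show ?thesis using part1 part2 part3 by blast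
  next
    case False
    have inner0: "d {V k, V j} = 0" if "k \<in> {1..n}" "j \<in> {1..n}" "k \<noteq> j" for k j
      using False that unfolding R_def by force
    have aeq: "a = (\<lambda>e. if e \<in> Sdom n then - d e else 0)"
      unfolding a_def AA_def using False by simp
    have part1: "\<forall>e. e \<notin> Sdom n \<longrightarrow> a e = 0" using aeq by auto
    have "(\<Sum>e\<in>Sdom n. \<bar>a e\<bar>) = (\<Sum>e\<in>Sdom n. if e = e0 then \<bar>\<delta>\<bar> else 0)"
      using aeq dd by (intro sum.cong) auto
    also have "\<dots> \<le> 1" using fin_S dl by (simp add: sum.delta \<delta>_def)
    finally have part2: "(\<Sum>e\<in>Sdom n. \<bar>a e\<bar>) \<le> 2" by simp
    have st: "{Src, Snk} \<in> edges n" by (auto simp: edges_def Vhat_def)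
    have eff: "w' e + a e = w e + (if e = {Src, Snk} then d {Src, Snk} else 0)" if eE: "e \<in> edges n" for e
    proof -
      obtain u v where uv: "u \<in> Vhat n" "v \<in> Vhat n" "u \<noteq> v" "e = {u, v}"
        using eE unfolding edges_def by blast
      show ?thesis
      proof (cases "e \<in> Sdom n")
        case True
        then have "e \<noteq> {Src, Snk}" by (auto simp: Sdom_def doubleton_eq_iff)
        then show ?thesis using True aeq w'eq[OF eE] by simp
      next
        case F2: False
        have "e = {Src, Snk} \<or> (\<exists>k j. k \<in> {1..n} \<and> j \<in> {1..n} \<and> k \<noteq> j \<and> e = {V k, V j})"
        proof -
          have "u \<in> {Src, Snk} \<or> (\<exists>k\<in>{1..n}. u = V k)" "v \<in> {Src, Snk} \<or> (\<exists>k\<in>{1..n}. v = V k)"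
            using uv by (auto simp: Vhat_def)
          then show ?thesis
          proof (elim disjE bexE)
            fix k assume "u = V k" "k \<in> {1..n}" "v \<in> {Src, Snk}"
            then have "e \<in> Sdom n" using uv unfolding Sdom_def by (auto simp: insert_commute)
            then show ?thesis using F2 by blast
          next
            fix k assume "v = V k" "k \<in> {1..n}" "u \<in> {Src, Snk}"
            then have "e \<in> Sdom n" using uv unfolding Sdom_def by auto
            then show ?thesis using F2 by blast
          next
            fix k j assume "u = V k" "k \<in> {1..n}" "v = V j" "j \<in> {1..n}"
            then show ?thesis using uv by blast
          next
            assume "u \<in> {Src, Snk}" "v \<in> {Src, Snk}"
            then show ?thesis using uv by (auto simp: insert_commute)
          qed
        qed
        then show ?thesis using F2 aeq w'eq[OF eE] inner0 by auto
      qed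
    qed
    have cv: "cutval n (\<lambda>e. w' e + a e) z = cutval n w z + d {Src, Snk} * (1 - z Src * z Snk)" for z
    proof -
      have "cutval n (\<lambda>e. w' e + a e) z = cutval n (\<lambda>e. w e + (if e = {Src, Snk} then d {Src, Snk} else 0)) z"
        by (rule cut_cong) (simp add: eff)
      also have "\<dots> = cutval n w z + d {Src, Snk} * (1 - z Src * z Snk)"
        using st by (simp add: cut_add cut_delta)
      finally show ?thesis .
    qed
    have part3: "is_unique_max n (\<lambda>e. w' e + a e) y"
    proof (rule transfer_max[OF uy])
      fix z assume zc: "z \<in> cuts n"
      show "cutval n w y - cutval n w z \<le> cutval n (\<lambda>e. w' e + a e) y - cutval n (\<lambda>e. w' e + a e) z"
        unfolding cv using zc yc by (simp add: cuts_def)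
    qed
    show ?thesis using part1 part2 part3 by blast
  qed
  show "let a = AA n (fhat n w) (wdiff n w w') in
                (\<forall>e. e \<notin> Sdom n \<longrightarrow> a e = 0)
              \<and> (\<Sum>e\<in>Sdom n. \<bar>a e\<bar>) \<le> 2
              \<and> has_unique_max n (\<lambda>e. w' e + a e)
              \<and> fhat n (\<lambda>e. w' e + a e) = fhat n w"
    using goal fhat_eq[of n "\<lambda>e. w' e + a e" y] unfolding Let_def a_def y_def d_def has_unique_max_def
    by (auto simp: y_def[symmetric])
qed

end
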